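(* Let $N\ge3$, $\lambda\in\mathbb R$, and let $\mathbf P$ and $V$ be as defined below. Define the planar and non-planar tadpole amplitudes $$A^{\mathrm{pl}}_{x,y}=\frac{\lambda}{N^{3/2}}\sum_{a,b,c,d}\mathbf P_{x,a}\mathbf P_{y,b}\mathbf P_{c,d}V_{a,b,c,d},\qquad A^{\mathrm{np}}_{x,y}=\frac{\lambda}{N^{3/2}}\sum_{a,b,c,d}\mathbf P_{x,a}\mathbf P_{y,c}\mathbf P_{b,d}V_{a,b,c,d},$$ where $x,y,a,b,c,d$ range over $\{1,\dots,N\}^3$. Then $$A^{\mathrm{pl}}=\lambda\frac{(N-2)(4N-1)}{12N^{3/2}(N-1)}\,\mathbf P,\qquad A^{\mathrm{np}}=\lambda\frac{N^2-4}{3N^{3/2}(N-1)}\,\mathbf P,$$ and consequently $2A^{\mathrm{pl}}+A^{\mathrm{np}}=\lambda f_T(N)\mathbf P$ with $f_T(N)=\frac{(N-2)(2N+1)}{2N^{3/2}(N-1)}$, which is $O(N^{-1/2})$ as $N\to\infty$.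
   Context: Multi-indices $a=(a_1,a_2,a_3)\in\{1,\dots,N\}^3$. $\mathbf P$ is the symmetric kernel $\mathbf P_{a,b}=\tfrac13(\delta_{a_1b_1}\delta_{a_2b_2}\delta_{a_3b_3}-\delta_{a_1b_3}\delta_{a_2b_2}\delta_{a_3b_1})+\tfrac16(\delta_{a_1b_2}\delta_{a_2b_1}\delta_{a_3b_3}+\delta_{a_1b_1}\delta_{a_2b_3}\delta_{a_3b_2})-\tfrac16(\delta_{a_1b_2}\delta_{a_2b_3}\delta_{a_3b_1}+\delta_{a_1b_3}\delta_{a_2b_1}\delta_{a_3b_2})+\tfrac1{2(N-1)}(\delta_{a_1b_3}\delta_{a_2a_3}\delta_{b_1b_2}+\delta_{a_1a_2}\delta_{a_3b_1}\delta_{b_2b_3})-\tfrac1{2(N-1)}(\delta_{a_1b_1}\delta_{a_2a_3}\delta_{b_2b_3}+\delta_{a_1a_2}\delta_{a_3b_3}\delta_{b_1b_2})$, the orthogonal projector onto traceless tensors with mixed permutation symmetry (Young tableau with rows $\{1,2\},\{3\}$). The quartic ("complete" or tetrahedral) vertex kernel is $V_{a,b,c,d}=\delta_{a_3b_1}\delta_{b_3c_1}\delta_{c_3d_1}\delta_{d_3a_1}\delta_{a_2c_2}\delta_{b_2d_2}$, so that $\sum V_{a,b,c,d}T_aT_bT_cT_d=T_{i_1i_2i_3}T_{i_3i_4i_5}T_{i_5i_2i_6}T_{i_6i_4i_1}$. These are the tadpole contributions at first order in $\lambda$ to the two-point function of the model with partition function $\int d\mu_{\mathbf P}(T)\exp\big(\frac{\lambda}{4N^{3/2}}T_{i_1i_2i_3}T_{i_3i_4i_5}T_{i_5i_2i_6}T_{i_6i_4i_1}\big)$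 (adjacent external legs: planar, multiplicity 2; opposite external legs: non-planar, multiplicity 1). *)

theory Defs
  imports "HOL-Analysis.Analysis" "HOL-Library.Landau_Symbols"
begin

type_synonym midx = "nat \<times> nat \<times> nat"

definition idx :: "nat \<Rightarrow> midx set" where
  "idx N = {1..N} \<times> {1..N} \<times> {1..N}"

definition dl :: "nat \<Rightarrow> nat \<Rightarrow> real" where
  "dl i j = (if i = j then 1 else 0)"

text \<open>The projector P onto traceless mixed-symmetry tensors.\<close>
definition Pker :: "nat \<Rightarrow> midx \<Rightarrow> midx \<Rightarrow> real" where
  "Pker N a b = (case a of (a1,a2,a3) \<Rightarrow> case b of (b1,b2,b3) \<Rightarrow>
      1/3 * (dl a1 b1 * dl a2 b2 * dl a3 b3 - dl a1 b3 * dl a2 b2 * dl a3 b1)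
    + 1/6 * (dl a1 b2 * dl a2 b1 * dl a3 b3 + dl a1 b1 * dl a2 b3 * dl a3 b2)
    - 1/6 * (dl a1 b2 * dl a2 b3 * dl a3 b1 + dl a1 b3 * dl a2 b1 * dl a3 b2)
    + 1 / (2 * (real N - 1)) * (dl a1 b3 * dl a2 a3 * dl b1 b2 + dl a1 a2 * dl a3 b1 * dl b2 b3)
    - 1 / (2 * (real N - 1)) * (dl a1 b1 * dl a2 a3 * dl b2 b3 + dl a1 a2 * dl a3 b3 * dl b1 b2))"

definition Vker :: "midx \<Rightarrow> midx \<Rightarrow> midx \<Rightarrow> midx \<Rightarrow> real" where
  "Vker a b c d = (case a of (a1,a2,a3) \<Rightarrow> case b of (b1,b2,b3) \<Rightarrow>
      case c of (c1,c2,c3) \<Rightarrow> case d of (d1,d2,d3) \<Rightarrow>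
      dl a3 b1 * dl b3 c1 * dl c3 d1 * dl d3 a1 * dl a2 c2 * dl b2 d2)"

definition Apl :: "nat \<Rightarrow> real \<Rightarrow> midx \<Rightarrow> midx \<Rightarrow> real" where
  "Apl N lam x y = lam / real N powr (3/2) *
     (\<Sum>a\<in>idx N. \<Sum>b\<in>idx N. \<Sum>c\<in>idx N. \<Sum>d\<in>idx N.
        Pker N x a * Pker N y b * Pker N c d * Vker a b c d)"

definition Anp :: "nat \<Rightarrow> real \<Rightarrow> midx \<Rightarrow> midx \<Rightarrow> real" where
  "Anp N lam x y = lam / real N powr (3/2) *
     (\<Sum>a\<in>idx N. \<Sum>b\<in>idx N. \<Sum>c\<in>idx N. \<Sum>d\<in>idx N.
        Pker N x a * Pker N y c * Pker N b d * Vker a b c d)"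

definition fT :: "nat \<Rightarrow> real" where
  "fT N = (real N - 2) * (2 * real N + 1) / (2 * real N powr (3/2) * (real N - 1))"

end

theory Submission imports Defs "HOL-Real_Asymp.Real_Asymp" begin

lemma sum_idx: "(\<Sum>x\<in>idx N. f x) = (\<Sum>i=1..N. \<Sum>j=1..N. \<Sum>k=1..N. f (i,j,k))"
  unfolding idx_def by (simp add: sum.cartesian_product)

lemma if_mult_l: "(if P then x else 0) * (y::real) = (if P then x * y else 0)" by simp
lemma if_mult_r: "(y::real) * (if P then x else 0) = (if P then y * x else 0)" by simp
lemma if_div: "(if P then x else 0) / (y::real) = (if P then x / y else 0)" by simp
lemma sum_if_c: "(\<Sum>e\<in>S. if P then f e else (0::real)) = (if P then (\<Sum>e\<in>S. f e) else 0)" by simp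

definition kk :: "nat \<Rightarrow> real" where "kk N = 1 / (2 * (real N - 1))"
lemma Pker_k: "Pker N a b = (case a of (a1,a2,a3) \<Rightarrow> case b of (b1,b2,b3) \<Rightarrow>
      1/3 * (dl a1 b1 * dl a2 b2 * dl a3 b3 - dl a1 b3 * dl a2 b2 * dl a3 b1)
    + 1/6 * (dl a1 b2 * dl a2 b1 * dl a3 b3 + dl a1 b1 * dl a2 b3 * dl a3 b2)
    - 1/6 * (dl a1 b2 * dl a2 b3 * dl a3 b1 + dl a1 b3 * dl a2 b1 * dl a3 b2)
    + kk N * (dl a1 b3 * dl a2 a3 * dl b1 b2 + dl a1 a2 * dl a3 b1 * dl b2 b3)
    - kk N * (dl a1 b1 * dl a2 a3 * dl b2 b3 + dl a1 a2 * dl a3 b3 * dl b1 b2))"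
  unfolding Pker_def kk_def by simp
lemma kk_eq: "N \<ge> 3 \<Longrightarrow> kk N * (2 * real N - 2) = 1"
  unfolding kk_def by (simp add: field_simps)

lemma kk_nz: "N \<ge> 3 \<Longrightarrow> kk N \<noteq> 0" unfolding kk_def by simp
lemma N_kk: "N \<ge> 3 \<Longrightarrow> real N = 1 + 1 / (2 * kk N)" unfolding kk_def by (simp add: field_simps)
lemmas dsimps = sum_idx Pker_k Vker_def dl_def if_mult_l if_mult_r sum_if_c
  sum.distrib sum_subtractf distrib_left distrib_right left_diff_distrib right_diff_distrib if_div add_divide_distrib diff_divide_distrib sum_divide_distrib

definition Mpl :: "nat \<Rightarrow> midx \<Rightarrow> midx \<Rightarrow> real" where
 "Mpl N a b = (case a of (a1,a2,a3) \<Rightarrow> case b of (b1,b2,b3) \<Rightarrow>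
   dl a3 b1 * ((1/3 - real N/3 - 1/6 + kk N) * dl b3 a1 * dl a2 b2
     + (1/3 - real N/6) * dl b3 b2 * dl a2 a1 + (real N - 2) * kk N * dl b3 a2 * dl b2 a1))"

lemma M: assumes "a \<in> idx N" "b \<in> idx N" "N \<ge> 3"
  shows "(\<Sum>c\<in>idx N. \<Sum>d\<in>idx N. Pker N c d * Vker a b c d) = Mpl N a b"
proof -
  obtain a1 a2 a3 b1 b2 b3 where ab: "a = (a1,a2,a3)" "b=(b1,b2,b3)" by (cases a, cases b) auto
  have N: "real N - 1 \<noteq> 0" using assms by simp
  have c: "1 \<le> a1" "a1 \<le> N" "1 \<le> a2" "a2 \<le> N" "1 \<le> a3" "a3 \<le> N"
     "1 \<le> b1" "b1 \<le> N" "1 \<le> b2" "b2 \<le> N" "1 \<le> b3" "b3 \<le> N"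
    using assms unfolding ab idx_def by auto
  show ?thesis using c unfolding ab
    apply (simp add: dsimps cong: if_cong split del: if_split)
    apply (simp add: Mpl_def dl_def)
    apply (auto simp: algebra_simps)
    done
qed

lemma Psym: "Pker N x y = Pker N y x"
  by (cases x; cases y) (simp add: Pker_def dl_def algebra_simps)


lemma tr23: assumes "1 \<le> p" "p \<le> N" "1 \<le> q" "q \<le> N" "1 \<le> r" "r \<le> N" "1 \<le> c" "c \<le> N" "N \<ge> 3"
  shows "(\<Sum>e=1..N. Pker N (p,q,r) (c,e,e)) = 0"
  using assms by (simp add: dsimps cong: if_cong split del: if_split, (simp split: if_split)?, (simp_all add: N_kk kk_nz field_simps)?)

lemma tr13: assumes "1 \<le> p" "p \<le> N" "1 \<le> q" "q \<le> N" "1 \<le> r" "r \<le> N" "1 \<le> c" "c \<le> N" "N \<ge> 3"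
  shows "(\<Sum>e=1..N. Pker N (p,q,r) (e,c,e)) = 0"
  using assms by (simp add: dsimps cong: if_cong split del: if_split, (simp split: if_split)?, (simp_all add: N_kk kk_nz field_simps)?)

lemma S13: assumes "1 \<le> p" "p \<le> N" "1 \<le> q" "q \<le> N" "1 \<le> r" "r \<le> N"
     "1 \<le> b1" "b1 \<le> N" "1 \<le> b2" "b2 \<le> N" "1 \<le> b3" "b3 \<le> N" "N \<ge> 3"
  shows "(\<Sum>a\<in>idx N. Pker N (p,q,r) a * Pker N (b1,b2,b3) (snd (snd a), fst (snd a), fst a)) = 
     - Pker N (p,q,r) (b1,b2,b3)"
  using assms by (simp add: dsimps cong: if_cong split del: if_split, (simp split: if_split)?, (simp_all add: N_kk kk_nz field_simps)?)

lemma Scyc: assumes "1 \<le> p" "p \<le> N" "1 \<le> q" "q \<le> N" "1 \<le> r" "r \<le> N"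
     "1 \<le> b1" "b1 \<le> N" "1 \<le> b2" "b2 \<le> N" "1 \<le> b3" "b3 \<le> N" "N \<ge> 3"
  shows "(\<Sum>a\<in>idx N. Pker N (p,q,r) a * Pker N (b1,b2,b3) (snd (snd a), fst a, fst (snd a))) = 
     - 1/2 * Pker N (p,q,r) (b1,b2,b3)"
  using assms by (simp add: dsimps cong: if_cong split del: if_split, (simp split: if_split)?, (simp_all add: N_kk kk_nz field_simps)?)

lemma PP: assumes "1 \<le> p" "p \<le> N" "1 \<le> q" "q \<le> N" "1 \<le> r" "r \<le> N"
     "1 \<le> b1" "b1 \<le> N" "1 \<le> b2" "b2 \<le> N" "1 \<le> b3" "b3 \<le> N" "N \<ge> 3"
  shows "(\<Sum>a\<in>idx N. Pker N (p,q,r) a * Pker N (b1,b2,b3) a) = Pker N (p,q,r) (b1,b2,b3)"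
  using assms by (simp add: dsimps cong: if_cong split del: if_split, (simp split: if_split)?, (simp_all add: N_kk kk_nz field_simps)?)

lemmas dsimps0 = sum_idx dl_def if_mult_l if_mult_r sum_if_c
  sum.distrib sum_subtractf distrib_left distrib_right left_diff_distrib right_diff_distrib if_div add_divide_distrib diff_divide_distrib sum_divide_distrib

lemma Mb: assumes "1 \<le> p" "p \<le> N" "1 \<le> q" "q \<le> N" "1 \<le> r" "r \<le> N"
     "1 \<le> b1" "b1 \<le> N" "1 \<le> b2" "b2 \<le> N" "1 \<le> b3" "b3 \<le> N" "N \<ge> 3"
  shows "(\<Sum>b\<in>idx N. Pker N (b1,b2,b3) b * Mpl N (p,q,r) b) =
     (1/3 - real N/3 - 1/6 + kk N) * Pker N (b1,b2,b3) (r,q,p) + (real N - 2) * kk N * Pker N (b1,b2,b3) (r,p,q)"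
proof -
  have T: "(\<Sum>e=Suc 0..N. Pker N (b1,b2,b3) (r,e,e)) = 0" using tr23[of b1 N b2 b3 r] assms by simp
  show ?thesis
  using assms
  apply (simp add: dsimps0 Mpl_def cong: if_cong split del: if_split)
  apply (simp only: sum_divide_distrib[symmetric] sum_distrib_right[symmetric] T)
  apply (simp add: algebra_simps)
  done
qed

definition Kf :: "nat \<Rightarrow> midx \<Rightarrow> midx \<Rightarrow> real" where
 "Kf N a c = (case a of (a1,a2,a3) \<Rightarrow> case c of (c1,c2,c3) \<Rightarrow>
   dl a2 c2 * ((real N/3 + 1/3 - 2 * kk N) * dl a1 c1 * dl a3 c3
     - (real N/3 + 1/3 - 2 * kk N) * dl a1 a3 * dl c1 c3))"

lemma K: assumes "a \<in> idx N" "c \<in> idx N" "N \<ge> 3"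
  shows "(\<Sum>b\<in>idx N. \<Sum>d\<in>idx N. Pker N b d * Vker a b c d) = Kf N a c"
proof -
  obtain a1 a2 a3 b1 b2 b3 where ab: "a = (a1,a2,a3)" "c=(b1,b2,b3)" by (cases a, cases c) auto
  have c: "1 \<le> a1" "a1 \<le> N" "1 \<le> a2" "a2 \<le> N" "1 \<le> a3" "a3 \<le> N"
     "1 \<le> b1" "b1 \<le> N" "1 \<le> b2" "b2 \<le> N" "1 \<le> b3" "b3 \<le> N"
    using assms unfolding ab idx_def by auto
  show ?thesis using c unfolding ab
    apply (simp add: dsimps cong: if_cong split del: if_split)
    by (simp add: Kf_def dl_def, (auto simp: algebra_simps)?)
qed

lemma Kc: assumes "1 \<le> p" "p \<le> N" "1 \<le> q" "q \<le> N" "1 \<le> r" "r \<le> N"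
     "1 \<le> b1" "b1 \<le> N" "1 \<le> b2" "b2 \<le> N" "1 \<le> b3" "b3 \<le> N" "N \<ge> 3"
  shows "(\<Sum>c\<in>idx N. Pker N (b1,b2,b3) c * Kf N (p,q,r) c) =
     (real N/3 + 1/3 - 2 * kk N) * Pker N (b1,b2,b3) (p,q,r)"
proof -
  have T: "(\<Sum>e=Suc 0..N. Pker N (b1,b2,b3) (e,q,e)) = 0" using tr13[of b1 N b2 b3 q] assms by simp
  show ?thesis
  using assms
  apply (simp add: dsimps0 Kf_def cong: if_cong split del: if_split)
  apply (simp only: sum_divide_distrib[symmetric] sum_distrib_right[symmetric] T)
  apply (simp add: algebra_simps)
  done
qed
lemma comps: "x \<in> idx N \<Longrightarrow> 1 \<le> fst x \<and> fst x \<le> N \<and> 1 \<le> fst (snd x) \<and> fst (snd x) \<le> N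
   \<and> 1 \<le> snd (snd x) \<and> snd (snd x) \<le> N"
  unfolding idx_def by auto

lemma Apl_core: assumes x: "x \<in> idx N" and y: "y \<in> idx N" and N: "N \<ge> 3"
  shows "(\<Sum>a\<in>idx N. \<Sum>b\<in>idx N. \<Sum>c\<in>idx N. \<Sum>d\<in>idx N.
        Pker N x a * Pker N y b * Pker N c d * Vker a b c d)
     = ((1/3 - real N/3 - 1/6 + kk N) * (-1) + (real N - 2) * kk N * (-1/2)) * Pker N x y"
proof -
  obtain p q r where xp: "x = (p,q,r)" by (cases x) auto
  obtain b1 b2 b3 where yp: "y = (b1,b2,b3)" by (cases y) auto
  have cx: "1 \<le> p" "p \<le> N" "1 \<le> q" "q \<le> N" "1 \<le> r" "r \<le> N" using comps[OF x] xp by auto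
  have cy: "1 \<le> b1" "b1 \<le> N" "1 \<le> b2" "b2 \<le> N" "1 \<le> b3" "b3 \<le> N" using comps[OF y] yp by auto
  have "(\<Sum>a\<in>idx N. \<Sum>b\<in>idx N. \<Sum>c\<in>idx N. \<Sum>d\<in>idx N.
        Pker N x a * Pker N y b * Pker N c d * Vker a b c d)
     = (\<Sum>a\<in>idx N. Pker N x a * (\<Sum>b\<in>idx N. Pker N y b * (\<Sum>c\<in>idx N. \<Sum>d\<in>idx N. Pker N c d * Vker a b c d)))"
    by (simp add: sum_distrib_left mult.assoc)
  also have "\<dots> = (\<Sum>a\<in>idx N. Pker N x a * (\<Sum>b\<in>idx N. Pker N y b * Mpl N a b))"
    by (intro sum.cong refl arg_cong2[where f="(*)"]) (simp add: M N)
  also have "\<dots> = (\<Sum>a\<in>idx N. Pker N x a * ((1/3 - real N/3 - 1/6 + kk N) * Pker N y (snd (snd a), fst (snd a), fst a)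
        + (real N - 2) * kk N * Pker N y (snd (snd a), fst a, fst (snd a))))"
  proof (intro sum.cong refl arg_cong2[where f="(*)"])
    fix a assume a: "a \<in> idx N"
    obtain a1 a2 a3 where ap: "a = (a1,a2,a3)" by (cases a) auto
    have ca: "1 \<le> a1" "a1 \<le> N" "1 \<le> a2" "a2 \<le> N" "1 \<le> a3" "a3 \<le> N" using comps[OF a] ap by auto
    show "(\<Sum>b\<in>idx N. Pker N y b * Mpl N a b) = (1/3 - real N/3 - 1/6 + kk N) * Pker N y (snd (snd a), fst (snd a), fst a)
        + (real N - 2) * kk N * Pker N y (snd (snd a), fst a, fst (snd a))"
      unfolding ap yp using Mb[OF ca cy N] by simp
  qed
  also have "\<dots> = (1/3 - real N/3 - 1/6 + kk N) * (\<Sum>a\<in>idx N. Pker N x a * Pker N y (snd (snd a), fst (snd a), fst a))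
        + (real N - 2) * kk N * (\<Sum>a\<in>idx N. Pker N x a * Pker N y (snd (snd a), fst a, fst (snd a)))"
    by (simp only: distrib_left sum.distrib sum_distrib_left) (simp add: mult.left_commute)
  also have "\<dots> = ((1/3 - real N/3 - 1/6 + kk N) * (-1) + (real N - 2) * kk N * (-1/2)) * Pker N x y"
    unfolding xp yp S13[OF cx cy N] Scyc[OF cx cy N] by (simp add: field_simps)
  finally show ?thesis .
qed

lemma Anp_core: assumes x: "x \<in> idx N" and y: "y \<in> idx N" and N: "N \<ge> 3"
  shows "(\<Sum>a\<in>idx N. \<Sum>b\<in>idx N. \<Sum>c\<in>idx N. \<Sum>d\<in>idx N.
        Pker N x a * Pker N y c * Pker N b d * Vker a b c d)
     = (real N/3 + 1/3 - 2 * kk N) * Pker N x y"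
proof -
  obtain p q r where xp: "x = (p,q,r)" by (cases x) auto
  obtain b1 b2 b3 where yp: "y = (b1,b2,b3)" by (cases y) auto
  have cx: "1 \<le> p" "p \<le> N" "1 \<le> q" "q \<le> N" "1 \<le> r" "r \<le> N" using comps[OF x] xp by auto
  have cy: "1 \<le> b1" "b1 \<le> N" "1 \<le> b2" "b2 \<le> N" "1 \<le> b3" "b3 \<le> N" using comps[OF y] yp by auto
  have "(\<Sum>a\<in>idx N. \<Sum>b\<in>idx N. \<Sum>c\<in>idx N. \<Sum>d\<in>idx N.
        Pker N x a * Pker N y c * Pker N b d * Vker a b c d)
     = (\<Sum>a\<in>idx N. \<Sum>c\<in>idx N. \<Sum>b\<in>idx N. \<Sum>d\<in>idx N.
        Pker N x a * Pker N y c * Pker N b d * Vker a b c d)"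
    by (rule sum.cong[OF refl], rule sum.swap)
  also have "\<dots> = (\<Sum>a\<in>idx N. Pker N x a * (\<Sum>c\<in>idx N. Pker N y c * (\<Sum>b\<in>idx N. \<Sum>d\<in>idx N. Pker N b d * Vker a b c d)))"
    by (simp add: sum_distrib_left mult.assoc)
  also have "\<dots> = (\<Sum>a\<in>idx N. Pker N x a * (\<Sum>c\<in>idx N. Pker N y c * Kf N a c))"
    by (intro sum.cong refl arg_cong2[where f="(*)"]) (simp add: K N)
  also have "\<dots> = (\<Sum>a\<in>idx N. Pker N x a * ((real N/3 + 1/3 - 2 * kk N) * Pker N y a))"
  proof (intro sum.cong refl arg_cong2[where f="(*)"])
    fix a assume a: "a \<in> idx N"
    obtain a1 a2 a3 where ap: "a = (a1,a2,a3)" by (cases a) auto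
    have ca: "1 \<le> a1" "a1 \<le> N" "1 \<le> a2" "a2 \<le> N" "1 \<le> a3" "a3 \<le> N" using comps[OF a] ap by auto
    show "(\<Sum>c\<in>idx N. Pker N y c * Kf N a c) = (real N/3 + 1/3 - 2 * kk N) * Pker N y a"
      unfolding ap yp using Kc[OF ca cy N] by simp
  qed
  also have "\<dots> = (real N/3 + 1/3 - 2 * kk N) * (\<Sum>a\<in>idx N. Pker N x a * Pker N y a)"
    by (simp only: sum_distrib_left) (simp add: mult.left_commute)
  also have "\<dots> = (real N/3 + 1/3 - 2 * kk N) * Pker N x y"
    unfolding xp yp using PP[OF cx cy N] by simp
  finally show ?thesis .
qed

lemma arith3: "S \<noteq> 0 \<Longrightarrow> n - 1 \<noteq> 0 \<Longrightarrow>
   2 * (lam * ((n - 2) * (4 * n - 1) / (12 * S * (n - 1))) * P)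
   + lam * ((n ^ 2 - 4) / (3 * S * (n - 1))) * P
   = lam * ((n - 2) * (2 * n + 1) / (2 * S * (n - 1))) * P" for S n lam P :: real
proof -
  assume S: "S \<noteq> 0" and D: "n - 1 \<noteq> 0"
  define D where "D = n - 1"
  have n: "n = D + 1" unfolding D_def by simp
  have "D \<noteq> 0" using D unfolding D_def .
  then show ?thesis using S unfolding n by (simp add: field_simps power2_eq_square)
qed

theorem mainTheorem4:
  fixes N :: nat and lam :: real
  assumes "N \<ge> 3"
  shows "(\<forall>x\<in>idx N. \<forall>y\<in>idx N.
            Apl N lam x y = lam * ((real N - 2) * (4 * real N - 1)
                / (12 * real N powr (3/2) * (real N - 1))) * Pker N x y
          \<and> Anp N lam x y = lam * ((real N ^ 2 - 4)
                / (3 * real N powr (3/2) * (real N - 1))) * Pker N x y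
          \<and> 2 * Apl N lam x y + Anp N lam x y = lam * fT N * Pker N x y)
         \<and> fT \<in> O(\<lambda>n. real n powr (-1/2))"
proof
  have N1: "real N - 1 \<noteq> 0" and N2: "real N powr (3/2) \<noteq> 0" using assms by auto
  show "\<forall>x\<in>idx N. \<forall>y\<in>idx N.
            Apl N lam x y = lam * ((real N - 2) * (4 * real N - 1)
                / (12 * real N powr (3/2) * (real N - 1))) * Pker N x y
          \<and> Anp N lam x y = lam * ((real N ^ 2 - 4)
                / (3 * real N powr (3/2) * (real N - 1))) * Pker N x y
          \<and> 2 * Apl N lam x y + Anp N lam x y = lam * fT N * Pker N x y"
  proof (intro ballI)
    fix x y assume x: "x \<in> idx N" and y: "y \<in> idx N"
    define S where "S = real N powr (3/2)"
    have S: "S \<noteq> 0" using N2 S_def by simp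
    have c1: "(1/3 - real N/3 - 1/6 + kk N) * (-1) + (real N - 2) * kk N * (-1/2)
        = (real N - 2) * (4 * real N - 1) / (12 * (real N - 1))"
      using kk_nz[OF assms] by (simp only: N_kk[OF assms]) (simp add: field_simps)
    have c2: "real N/3 + 1/3 - 2 * kk N = (real N ^ 2 - 4) / (3 * (real N - 1))"
      using kk_nz[OF assms] by (simp only: N_kk[OF assms]) (simp add: field_simps power2_eq_square)
    have A1: "Apl N lam x y = lam * ((real N - 2) * (4 * real N - 1)
                / (12 * real N powr (3/2) * (real N - 1))) * Pker N x y"
      unfolding Apl_def Apl_core[OF x y assms] c1 S_def[symmetric] using N1 S
      by (simp add: field_simps)
    have A2: "Anp N lam x y = lam * ((real N ^ 2 - 4)
                / (3 * real N powr (3/2) * (real N - 1))) * Pker N x y"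
      unfolding Anp_def Anp_core[OF x y assms] c2 S_def[symmetric] using N1 S
      by (simp add: field_simps)
    have A3: "2 * Apl N lam x y + Anp N lam x y = lam * fT N * Pker N x y"
      unfolding A1 A2 fT_def S_def[symmetric] by (rule arith3[OF S N1])
    show "Apl N lam x y = lam * ((real N - 2) * (4 * real N - 1)
                / (12 * real N powr (3/2) * (real N - 1))) * Pker N x y
          \<and> Anp N lam x y = lam * ((real N ^ 2 - 4)
                / (3 * real N powr (3/2) * (real N - 1))) * Pker N x y
          \<and> 2 * Apl N lam x y + Anp N lam x y = lam * fT N * Pker N x y"
      using A1 A2 A3 by blast
  qed
  show "fT \<in> O(\<lambda>n. real n powr (-1/2))"
    unfolding fT_def by real_asymp
qed
end
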